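(* Let $f:2^V\to\mathbb{Z}_{\ge0}$ be a connectivity function and $C,W\subseteq V$. If $W$ disorients $C$ and $f(C)<f(W)/2$, then $(C, V\setminus C, \emptyset)$ is a $W$-improvement.
   Context: A connectivity function $f:2^V\to\mathbb{Z}_{\ge0}$ ($V$ finite) satisfies $f(\emptyset)=0$, $f(X)=f(V\setminus X)$, and $f(X\cup Y)+f(X\cap Y)\le f(X)+f(Y)$. Write $\overline{X}=V\setminus X$. The set $W$ directly orients $C$ if $f(C\cap W)<f(\overline{C}\cap W)$ and $f(C\cap\overline{W})<f(\overline{C}\cap\overline{W})$; $W$ inversely orients $C$ if it directly orients $\overline{C}$; $W$ disorients $C$ if it neither directly nor inversely orients $C$. For $W\subseteq V$, a $W$-improvement is a tripartition $(C_1,C_2,C_3)$ of $V$ (pairwise disjoint, possibly empty, union $V$) with $f(C_i)<f(W)/2$, $f(C_i\cap W)<f(W)$, $f(C_i\cap\overline{W})<f(W)$ for each $i$. *)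

theory Defs
  imports Main
begin

definition connectivity_function :: "'a set \<Rightarrow> ('a set \<Rightarrow> nat) \<Rightarrow> bool" where
  "connectivity_function V f \<longleftrightarrow>
     f {} = 0 \<and>
     (\<forall>X. X \<subseteq> V \<longrightarrow> f X = f (V - X)) \<and>
     (\<forall>X Y. X \<subseteq> V \<longrightarrow> Y \<subseteq> V \<longrightarrow> f (X \<union> Y) + f (X \<inter> Y) \<le> f X + f Y)"

definition directly_orients :: "'a set \<Rightarrow> ('a set \<Rightarrow> nat) \<Rightarrow> 'a set \<Rightarrow> 'a set \<Rightarrow> bool" where
  "directly_orients V f W C \<longleftrightarrow>
     f (C \<inter> W) < f ((V - C) \<inter> W) \<and> f (C \<inter> (V - W)) < f ((V - C) \<inter> (V - W))"

definition inversely_orients :: "'a set \<Rightarrow> ('a set \<Rightarrow> nat) \<Rightarrow> 'a set \<Rightarrow> 'a set \<Rightarrow> bool" where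
  "inversely_orients V f W C \<longleftrightarrow> directly_orients V f W (V - C)"

definition disorients :: "'a set \<Rightarrow> ('a set \<Rightarrow> nat) \<Rightarrow> 'a set \<Rightarrow> 'a set \<Rightarrow> bool" where
  "disorients V f W C \<longleftrightarrow> \<not> directly_orients V f W C \<and> \<not> inversely_orients V f W C"

text \<open>A W-improvement: tripartition (C1,C2,C3) of V. The bound f(Ci) < f(W)/2 is
  written as 2 * f Ci < f W (exact over the integers).\<close>
definition improvement :: "'a set \<Rightarrow> ('a set \<Rightarrow> nat) \<Rightarrow> 'a set \<Rightarrow> 'a set \<times> 'a set \<times> 'a set \<Rightarrow> bool" where
  "improvement V f W P \<longleftrightarrow> (case P of (C1, C2, C3) \<Rightarrow>
     C1 \<union> C2 \<union> C3 = V \<and> C1 \<inter> C2 = {} \<and> C1 \<inter> C3 = {} \<and> C2 \<inter> C3 = {} \<and>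
     (\<forall>Ci \<in> {C1, C2, C3}.
        2 * f Ci < f W \<and> f (Ci \<inter> W) < f W \<and> f (Ci \<inter> (V - W)) < f W))"

end

theory Submission
  imports Defs
begin

theorem lemma3:
  fixes V :: "'a set" and f :: "'a set \<Rightarrow> nat" and C W :: "'a set"
  assumes "finite V"
    and "connectivity_function V f"
    and "C \<subseteq> V" and "W \<subseteq> V"
    and "disorients V f W C"
    and "2 * f C < f W"
  shows "improvement V f W (C, V - C, {})"
proof -
  have e: "f {} = 0" and cm: "\<And>X. X \<subseteq> V \<Longrightarrow> f X = f (V - X)"
    and sm: "\<And>X Y. X \<subseteq> V \<Longrightarrow> Y \<subseteq> V \<Longrightarrow> f (X \<union> Y) + f (X \<inter> Y) \<le> f X + f Y"
    using assms(2) unfolding connectivity_function_def by blast+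
  define a where "a = f (C \<inter> W)"
  define b where "b = f ((V - C) \<inter> W)"
  define x where "x = f (C \<inter> (V - W))"
  define y where "y = f ((V - C) \<inter> (V - W))"
  define c where "c = f C"
  define k where "k = f W"
  have cC: "f (V - C) = c" using cm[OF assms(3)] c_def by simp
  have kW: "f (V - W) = k" using cm[OF assms(4)] k_def by simp
  have s1: "a + y \<le> c + k"
  proof -
    have "f (C \<union> W) + f (C \<inter> W) \<le> f C + f W" by (rule sm) (use assms(3,4) in blast)+
    moreover have "V - (C \<union> W) = (V - C) \<inter> (V - W)" by blast
    moreover have "f (C \<union> W) = f (V - (C \<union> W))" by (rule cm) (use assms(3,4) in blast)
    ultimately show ?thesis unfolding a_def y_def c_def k_def by simp
  qed
  have s2: "x + b \<le> c + k"
  proof -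
    have "f (C \<union> (V - W)) + f (C \<inter> (V - W)) \<le> f C + f (V - W)" by (rule sm) (use assms(3,4) in blast)+
    moreover have "V - (C \<union> (V - W)) = (V - C) \<inter> W" using assms(4) by blast
    moreover have "f (C \<union> (V - W)) = f (V - (C \<union> (V - W)))" by (rule cm) (use assms(3,4) in blast)
    ultimately show ?thesis unfolding x_def b_def c_def using kW by simp
  qed
  have s3: "k \<le> a + b"
  proof -
    have "f ((C \<inter> W) \<union> ((V - C) \<inter> W)) + f ((C \<inter> W) \<inter> ((V - C) \<inter> W)) \<le> a + b"
      unfolding a_def b_def using sm assms(3,4) by (intro sm) auto
    moreover have "(C \<inter> W) \<union> ((V - C) \<inter> W) = W" using assms(4) by blast
    moreover have "(C \<inter> W) \<inter> ((V - C) \<inter> W) = {}" by blast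
    ultimately show ?thesis unfolding k_def using e by simp
  qed
  have s4: "k \<le> x + y"
  proof -
    have "f ((C \<inter> (V - W)) \<union> ((V - C) \<inter> (V - W))) + f ((C \<inter> (V - W)) \<inter> ((V - C) \<inter> (V - W))) \<le> x + y"
      unfolding x_def y_def using sm assms(3,4) by (intro sm) auto
    moreover have "(C \<inter> (V - W)) \<union> ((V - C) \<inter> (V - W)) = V - W" using assms(3) by blast
    moreover have "(C \<inter> (V - W)) \<inter> ((V - C) \<inter> (V - W)) = {}" by blast
    ultimately show ?thesis using kW e by simp
  qed
  have dis: "(b \<le> a \<or> y \<le> x) \<and> (a \<le> b \<or> x \<le> y)"
  proof -
    have "V - (V - C) = C" using assms(3) by blast
    then show ?thesis using assms(5) unfolding disorients_def inversely_orients_def directly_orients_def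
        a_def b_def x_def y_def by auto
  qed
  have ck: "2 * c < k" using assms(6) c_def k_def by simp
  have "a < k \<and> b < k \<and> x < k \<and> y < k" using dis proof (elim conjE disjE) qed (use s1 s2 s3 s4 ck in linarith)+
  then have "a < k" "b < k" "x < k" "y < k" by auto
  then show ?thesis unfolding improvement_def using ck cC e assms(3)
    by (auto simp: a_def b_def x_def y_def c_def k_def)
qed

end
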